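(* For $\alpha,\beta\in K$, $$\Omega\big(\widetilde{\mathbf f}^+_\alpha(\lambda_1,z),\widetilde{\mathbf f}^-_\beta(\lambda_2,z)\big)=-2\pi\mathbf{i}\,\mathrm{rk}(\alpha)\deg(\beta)+\log\Big((Q\lambda_2^{-1/(n-2)})^{\mathrm{rk}(\alpha)\mathrm{rk}(\beta)}\prod_{s=1}^\kappa\big(1-\eta^{-s}(\lambda_2/\lambda_1)^{1/\kappa}\big)^{(\alpha|\sigma^s\beta)}\Big),$$ where $\kappa=2(n-2)$, $\eta=e^{2\pi\mathbf{i}/\kappa}$, and the right-hand side is expanded as a Laurent series in $\lambda_1^{-1}$ in the region $|\lambda_1|>|\lambda_2|$.
   Context: Fix an integer $n\ge3$; $a_1=n-2$, $a_2=a_3=2$; $X=\mathbb{P}^1_{n-2,2,2}$. $H$ is its Chen–Ruan cohomology with basis $\phi_{0,0}=1$, $\phi_{0,1}=P$, $\phi_{i,p}$ ($1\le i\le3$, $1\le p\le a_i-1$, twisted sectors), pairing $(\phi_{0,0},\phi_{0,1})=1$, $(\phi_{i,p},\phi_{i,a_i-p})=1/a_i$, all other pairings of basis vectors zero. $Q\in\mathbb{C}^*$ with fixed $\log Q$. $K=\mathbb{Z}[L_1,L_2,L_3]/\langle L_i^{a_i}-L_j^{a_j},(L_i-1)(L_j-1):i\neq j\rangle$, $L:=L_1^{n-2}$; $\mathrm{rk}$ ring map $L_i\mapsto1$; $\deg$ additive with $\deg(1)=0$, $\deg(L_i)=1/a_i$, $\deg(EF)=\mathrm{rk}(E)\deg(F)+\mathrm{rk}(F)\deg(E)$;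 $\chi_{j,p}$ ring map with $\chi_{j,p}(L_i)=e^{-2\pi\mathbf{i}p\delta_{j,i}/a_j}$. Calibrated periods: for $\alpha\in K$, $\ell\ge0$: $\widetilde I^{(-\ell-1)}_\alpha(\lambda)=\mathrm{rk}(\alpha)\frac{\lambda^{\ell+1}}{(\ell+1)!}\phi_{0,0}+\frac{\lambda^\ell}{\ell!}(\frac{\mathrm{rk}(\alpha)}{n-2}(\log\lambda-C_\ell)+2\pi\mathbf{i}\deg(\alpha))\phi_{0,1}+\sum_{j,p}\frac{\lambda^{\ell+1-p/a_j}}{(\ell+1-\frac p{a_j})\cdots(1-\frac p{a_j})}\chi_{j,p}(\alpha)\phi_{j,p}$, $C_0=(n-2)\log Q$, $C_{\ell+1}=C_\ell+\frac1{\ell+1}$; and $\widetilde I^{(m)}_\alpha=\partial_\lambda^{m+1}\widetilde I^{(-1)}_\alpha$ for $m\ge0$. $\widetilde{\mathbf f}^+_\alpha(\lambda,z)=\sum_{m\ge0}\widetilde I^{(m)}_\alpha(\lambda)(-z)^m$, $\widetilde{\mathbf f}^-_\alpha(\lambda,z)=\sum_{m<0}\widetilde I^{(m)}_\alpha(\lambda)(-z)^m$. $\Omega(f,g)=\mathrm{Res}_{z=0}(f(-z),g(z))dz$. Euler pairing $\langle a,b\rangle=\chi(a^\vee\otimes b)$ on $K$ and intersection pairing $(a|b)=\langle a,b\rangle+\langle b,a\rangle$; $\sigma:K\to K$ is multiplication by the tangent bundle class $T=L_1+L_2+L_3-L-1$. *)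

theory Defs
  imports "HOL-Analysis.Analysis"
begin

section \<open>Orbifold data for P^1 with orbifold points of orders n-2, 2, 2\<close>

definition aw :: "nat \<Rightarrow> nat \<Rightarrow> nat" where
  "aw n j = (if j = 1 then n - 2 else 2)"

definition kappa :: "nat \<Rightarrow> nat" where
  "kappa n = 2 * (n - 2)"

definition eta :: "nat \<Rightarrow> complex" where
  "eta n = exp (2 * pi * \<i> / of_nat (kappa n))"

section \<open>The K-group, modelled by Laurent polynomials in L1, L2, L3\<close>

text \<open>An element of K is represented by a finitely supported function
  (k1,k2,k3) |-> coefficient of L1^k1 L2^k2 L3^k3 (Laurent polynomial over Z).
  All maps below are well defined on the quotient ring K.\<close>

type_synonym Kel = "int \<times> int \<times> int \<Rightarrow> int"

definition cmp :: "int \<times> int \<times> int \<Rightarrow> nat \<Rightarrow> int" where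
  "cmp m j = (if j = 1 then fst m else if j = 2 then fst (snd m) else snd (snd m))"

definition Ksupp :: "Kel \<Rightarrow> (int \<times> int \<times> int) set" where
  "Ksupp c = {m. c m \<noteq> 0}"

definition Kmon :: "int \<times> int \<times> int \<Rightarrow> Kel" where
  "Kmon m = (\<lambda>x. if x = m then 1 else 0)"

definition Kmult :: "Kel \<Rightarrow> Kel \<Rightarrow> Kel" where
  "Kmult c d = (\<lambda>(k1, k2, k3). \<Sum>(u1, u2, u3)\<in>Ksupp c. c (u1, u2, u3) * d (k1 - u1, k2 - u2, k3 - u3))"

definition Kdual :: "Kel \<Rightarrow> Kel" where
  "Kdual c = (\<lambda>(k1, k2, k3). c (- k1, - k2, - k3))"

definition rk :: "Kel \<Rightarrow> int" where
  "rk c = (\<Sum>m\<in>Ksupp c. c m)"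

definition degK :: "nat \<Rightarrow> Kel \<Rightarrow> real" where
  "degK n c = (\<Sum>m\<in>Ksupp c. of_int (c m) * (\<Sum>j\<in>{1..3}. of_int (cmp m j) / of_nat (aw n j)))"

definition chiK :: "nat \<Rightarrow> nat \<Rightarrow> nat \<Rightarrow> Kel \<Rightarrow> complex" where
  "chiK n j p c = (\<Sum>m\<in>Ksupp c. of_int (c m) *
      exp (- 2 * pi * \<i> * of_nat p * of_int (cmp m j) / of_nat (aw n j)))"

text \<open>Euler characteristic: the line bundle L1^k1 L2^k2 L3^k3 = O(sum k_i x_i) on the orbifold
  P^1 has chi = 1 + sum floor(k_i / a_i) (its sections are those of O(sum floor(k_i/a_i)) on P^1).\<close>
definition eulerK :: "nat \<Rightarrow> Kel \<Rightarrow> int" where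
  "eulerK n c = (\<Sum>m\<in>Ksupp c. c m * ((\<Sum>j\<in>{1..3}. cmp m j div int (aw n j)) + 1))"

definition euler_pair :: "nat \<Rightarrow> Kel \<Rightarrow> Kel \<Rightarrow> int" where
  "euler_pair n a b = eulerK n (Kmult (Kdual a) b)"

definition int_pair :: "nat \<Rightarrow> Kel \<Rightarrow> Kel \<Rightarrow> int" where
  "int_pair n a b = euler_pair n a b + euler_pair n b a"

definition tangent :: "nat \<Rightarrow> Kel" where
  "tangent n = (\<lambda>x. Kmon (1, 0, 0) x + Kmon (0, 1, 0) x + Kmon (0, 0, 1) x
                   - Kmon (int (n - 2), 0, 0) x - Kmon (0, 0, 0) x)"

definition sigmaK :: "nat \<Rightarrow> nat \<Rightarrow> Kel \<Rightarrow> Kel" where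
  "sigmaK n s b = (Kmult (tangent n) ^^ s) b"

section \<open>Chen--Ruan cohomology H\<close>

text \<open>Vectors of H given by coordinates: index (0,0) = 1, (0,1) = P, (j,p) twisted sectors.\<close>
type_synonym Hvec = "nat \<times> nat \<Rightarrow> complex"

definition twisted :: "nat \<Rightarrow> (nat \<times> nat) set" where
  "twisted n = Sigma {1..3} (\<lambda>j. {1..<aw n j})"

definition pairH :: "nat \<Rightarrow> Hvec \<Rightarrow> Hvec \<Rightarrow> complex" where
  "pairH n u v = u (0, 0) * v (0, 1) + u (0, 1) * v (0, 0)
     + (\<Sum>(j, p)\<in>twisted n. u (j, p) * v (j, aw n j - p) / of_nat (aw n j))"

text \<open>lambda is a point of the universal cover of C^*, parametrised by t with lambda = exp t,
  so that log lambda = t and lambda^c = exp (c t).\<close>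

fun Cc :: "nat \<Rightarrow> complex \<Rightarrow> nat \<Rightarrow> complex" where
  "Cc n logQ 0 = of_nat (n - 2) * logQ"
| "Cc n logQ (Suc l) = Cc n logQ l + 1 / of_nat (Suc l)"

text \<open>Ineg n logQ c l t = I^{(-l-1)}_c(lambda) with lambda = exp t.\<close>
definition Ineg :: "nat \<Rightarrow> complex \<Rightarrow> Kel \<Rightarrow> nat \<Rightarrow> complex \<Rightarrow> Hvec" where
  "Ineg n logQ c l t = (\<lambda>(i, p).
     if (i, p) = (0, 0) then of_int (rk c) * exp (of_nat (l + 1) * t) / fact (l + 1)
     else if (i, p) = (0, 1) then exp (of_nat l * t) / fact l *
        (of_int (rk c) / of_nat (n - 2) * (t - Cc n logQ l) + 2 * pi * \<i> * of_real (degK n c))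
     else if (i, p) \<in> twisted n then
        exp ((of_nat (l + 1) - of_nat p / of_nat (aw n i)) * t)
          / (\<Prod>k\<in>{1..l + 1}. of_nat k - of_nat p / of_nat (aw n i)) * chiK n i p c
     else 0)"

text \<open>d/d lambda, expressed in the coordinate t (lambda = exp t).\<close>
definition Dlam :: "(complex \<Rightarrow> complex) \<Rightarrow> complex \<Rightarrow> complex" where
  "Dlam f = (\<lambda>t. exp (- t) * deriv f t)"

text \<open>Ipos n logQ c m t = I^{(m)}_c(lambda) = d^{m+1}/d lambda^{m+1} I^{(-1)}_c, m >= 0.\<close>
definition Ipos :: "nat \<Rightarrow> complex \<Rightarrow> Kel \<Rightarrow> nat \<Rightarrow> complex \<Rightarrow> Hvec" where
  "Ipos n logQ c m t = (\<lambda>idx. (Dlam ^^ Suc m) (\<lambda>s. Ineg n logQ c 0 s idx) t)"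

text \<open>Coefficients of (-z)^m of f^+ and f^-.\<close>
definition fplus :: "nat \<Rightarrow> complex \<Rightarrow> Kel \<Rightarrow> complex \<Rightarrow> int \<Rightarrow> Hvec" where
  "fplus n logQ c t = (\<lambda>m. if 0 \<le> m then Ipos n logQ c (nat m) t else (\<lambda>_. 0))"

definition fminus :: "nat \<Rightarrow> complex \<Rightarrow> Kel \<Rightarrow> complex \<Rightarrow> int \<Rightarrow> Hvec" where
  "fminus n logQ c t = (\<lambda>m. if m < 0 then Ineg n logQ c (nat (- m - 1)) t else (\<lambda>_. 0))"

text \<open>Omega(f,g) = Res_{z=0} (f(-z), g(z)) dz for f(z) = sum_m f_m (-z)^m, g(z) = sum_m g_m (-z)^m:
  the coefficient of z^{-1} is sum_m (-1)^(m+1) (f_m, g_{-1-m}).\<close>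
definition OmegaHas :: "nat \<Rightarrow> (int \<Rightarrow> Hvec) \<Rightarrow> (int \<Rightarrow> Hvec) \<Rightarrow> complex \<Rightarrow> bool" where
  "OmegaHas n f g v \<longleftrightarrow>
     ((\<lambda>m::int. (- 1 :: complex) powi (m + 1) * pairH n (f m) (g (- 1 - m))) has_sum v) UNIV"

end

theory Submission
  imports Defs
begin


lemma triple_diff: "(a, b, c) - x = (a - fst x, b - fst (snd x), c - snd (snd x))"
  by (cases x) auto

lemma Kmult_eq: "Kmult c d k = (\<Sum>u\<in>Ksupp c. c u * d (k - u))"
  unfolding Kmult_def by (cases k) (simp add: case_prod_beta' triple_diff)

definition evl :: "(int \<times> int \<times> int \<Rightarrow> 'a::comm_ring_1) \<Rightarrow> Kel \<Rightarrow> 'a" where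
  "evl g c = (\<Sum>m\<in>Ksupp c. of_int (c m) * g m)"

lemma evl_superset:
  assumes "finite S" "Ksupp c \<subseteq> S"
  shows "evl g c = (\<Sum>m\<in>S. of_int (c m) * g m)"
  unfolding evl_def
  by (rule sum.mono_neutral_left) (use assms in \<open>auto simp: Ksupp_def\<close>)

lemma Ksupp_Kmult_sub:
  "Ksupp (Kmult c d) \<subseteq> (\<lambda>(u,v). u + v) ` (Ksupp c \<times> Ksupp d)"
proof
  fix k assume k: "k \<in> Ksupp (Kmult c d)"
  show "k \<in> (\<lambda>(u,v). u + v) ` (Ksupp c \<times> Ksupp d)"
  proof (rule ccontr)
    assume nk: "k \<notin> (\<lambda>(u,v). u + v) ` (Ksupp c \<times> Ksupp d)"
    have "\<And>u. u \<in> Ksupp c \<Longrightarrow> d (k - u) = 0"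
    proof -
      fix u assume u: "u \<in> Ksupp c"
      show "d (k - u) = 0"
      proof (rule ccontr)
        assume "d (k - u) \<noteq> 0"
        then have "k - u \<in> Ksupp d" by (simp add: Ksupp_def)
        then have "u + (k - u) \<in> (\<lambda>(u,v). u + v) ` (Ksupp c \<times> Ksupp d)" using u by force
        then show False using nk by simp
      qed
    qed
    then have "Kmult c d k = 0" by (simp add: Kmult_eq)
    then show False using k by (simp add: Ksupp_def)
  qed
qed

lemma finite_Ksupp_Kmult:
  "finite (Ksupp c) \<Longrightarrow> finite (Ksupp d) \<Longrightarrow> finite (Ksupp (Kmult c d))"
  by (rule finite_subset[OF Ksupp_Kmult_sub]) auto

lemma Kmult_sum:
  fixes g :: "int \<times> int \<times> int \<Rightarrow> 'a::comm_ring_1"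
  assumes fc: "finite (Ksupp c)" and fd: "finite (Ksupp d)"
  shows "evl g (Kmult c d) = (\<Sum>u\<in>Ksupp c. \<Sum>v\<in>Ksupp d. of_int (c u) * of_int (d v) * g (u + v))"
proof -
  define S where "S = (\<lambda>(u,v). u + v) ` (Ksupp c \<times> Ksupp d)"
  have fS: "finite S" using fc fd by (simp add: S_def)
  have "evl g (Kmult c d) = (\<Sum>k\<in>S. of_int (Kmult c d k) * g k)"
    by (rule evl_superset[OF fS]) (simp add: S_def Ksupp_Kmult_sub)
  also have "\<dots> = (\<Sum>k\<in>S. \<Sum>u\<in>Ksupp c. of_int (c u) * of_int (d (k - u)) * g k)"
    by (simp add: Kmult_eq sum_distrib_right)
  also have "\<dots> = (\<Sum>u\<in>Ksupp c. \<Sum>k\<in>S. of_int (c u) * of_int (d (k - u)) * g k)"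
    by (rule sum.swap)
  also have "\<dots> = (\<Sum>u\<in>Ksupp c. \<Sum>v\<in>Ksupp d. of_int (c u) * of_int (d v) * g (u + v))"
  proof (rule sum.cong[OF refl])
    fix u assume u: "u \<in> Ksupp c"
    have sub: "(\<lambda>v. u + v) ` Ksupp d \<subseteq> S" using u by (auto simp: S_def)
    have "(\<Sum>k\<in>S. of_int (c u) * of_int (d (k - u)) * g k)
        = (\<Sum>k\<in>(\<lambda>v. u + v) ` Ksupp d. of_int (c u) * of_int (d (k - u)) * g k)"
    proof (rule sum.mono_neutral_right[OF fS sub])
      show "\<forall>k\<in>S - (\<lambda>v. u + v) ` Ksupp d. of_int (c u) * of_int (d (k - u)) * g k = 0"
      proof
        fix k assume "k \<in> S - (\<lambda>v. u + v) ` Ksupp d"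
        then have "k - u \<notin> Ksupp d" by (metis DiffD2 add_diff_cancel_left' image_eqI add.commute diff_add_cancel)
        then show "of_int (c u) * of_int (d (k - u)) * g k = 0" by (simp add: Ksupp_def)
      qed
    qed
    also have "\<dots> = (\<Sum>v\<in>Ksupp d. of_int (c u) * of_int (d v) * g (u + v))"
      by (subst sum.reindex) (auto simp: inj_on_def)
    finally show "(\<Sum>k\<in>S. of_int (c u) * of_int (d (k - u)) * g k)
        = (\<Sum>v\<in>Ksupp d. of_int (c u) * of_int (d v) * g (u + v))" .
  qed
  finally show ?thesis .
qed

lemma evl_mult:
  fixes g :: "int \<times> int \<times> int \<Rightarrow> 'a::comm_ring_1"
  assumes "finite (Ksupp c)" "finite (Ksupp d)" "\<And>u v. g (u + v) = g u * g v"
  shows "evl g (Kmult c d) = evl g c * evl g d"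
  apply (subst Kmult_sum[OF assms(1,2)])
  by (simp add: assms(3) evl_def sum_product mult_ac)

lemma Kdual_eq: "Kdual a m = a (- m)"
  unfolding Kdual_def by (cases m) simp

lemma Ksupp_Kdual: "Ksupp (Kdual a) = uminus ` Ksupp a"
proof
  show "Ksupp (Kdual a) \<subseteq> uminus ` Ksupp a"
  proof
    fix x assume "x \<in> Ksupp (Kdual a)"
    then have "- x \<in> Ksupp a" by (simp add: Ksupp_def Kdual_eq)
    then show "x \<in> uminus ` Ksupp a" by (metis image_eqI minus_minus)
  qed
  show "uminus ` Ksupp a \<subseteq> Ksupp (Kdual a)"
    by (auto simp: Ksupp_def Kdual_eq)
qed

lemma finite_Ksupp_Kdual: "finite (Ksupp a) \<Longrightarrow> finite (Ksupp (Kdual a))"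
  by (simp add: Ksupp_Kdual)

lemma sum_Kdual: "(\<Sum>u\<in>Ksupp (Kdual a). F u) = (\<Sum>u\<in>Ksupp a. F (- u))"
  by (simp add: Ksupp_Kdual sum.reindex inj_on_def)



lemma Ksupp_tangent_sub:
  "Ksupp (tangent n) \<subseteq> {(1,0,0), (0,1,0), (0,0,1), (int (n - 2),0,0), (0,0,0)}"
  by (auto simp: Ksupp_def tangent_def Kmon_def split: if_splits)

lemma finite_Ksupp_tangent: "finite (Ksupp (tangent n))"
  by (rule finite_subset[OF Ksupp_tangent_sub]) auto

lemma evl_tangent:
  "evl g (tangent n) = g (1,0,0) + g (0,1,0) + g (0,0,1) - g (int (n - 2),0,0) - g (0,0,0)"
proof -
  define S where "S = {(1::int,0::int,0::int), (0,1,0), (0,0,1), (int (n - 2),0,0), (0,0,0)}"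
  have fS: "finite S" by (simp add: S_def)
  have "evl g (tangent n) = (\<Sum>m\<in>S. of_int (tangent n m) * g m)"
    by (rule evl_superset[OF fS]) (simp add: S_def Ksupp_tangent_sub)
  also have "\<dots> = (\<Sum>m\<in>S. (if m = (1,0,0) then g m else 0) + (if m = (0,1,0) then g m else 0)
      + (if m = (0,0,1) then g m else 0) - (if m = (int (n - 2),0,0) then g m else 0)
      - (if m = (0,0,0) then g m else 0))"
    by (rule sum.cong) (auto simp: tangent_def Kmon_def algebra_simps)
  also have "\<dots> = g (1,0,0) + g (0,1,0) + g (0,0,1) - g (int (n - 2),0,0) - g (0,0,0)"
    using fS by (simp add: sum.distrib sum_subtractf S_def[symmetric] sum.delta') (simp add: S_def)
  finally show ?thesis .
qed

lemma sigmaK_Suc: "sigmaK n (Suc s) b = Kmult (tangent n) (sigmaK n s b)"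
  by (simp add: sigmaK_def)

lemma finite_Ksupp_sigma: "finite (Ksupp b) \<Longrightarrow> finite (Ksupp (sigmaK n s b))"
  by (induction s) (simp_all add: sigmaK_Suc sigmaK_def[of n 0] finite_Ksupp_Kmult finite_Ksupp_tangent)

lemma evl_sigma:
  fixes g :: "int \<times> int \<times> int \<Rightarrow> 'a::comm_ring_1"
  assumes "finite (Ksupp b)" "\<And>u v. g (u + v) = g u * g v"
  shows "evl g (sigmaK n s b) = evl g (tangent n) ^ s * evl g b"
proof (induction s)
  case 0 then show ?case by (simp add: sigmaK_def)
next
  case (Suc s)
  then show ?case
    by (simp add: sigmaK_Suc evl_mult[OF finite_Ksupp_tangent finite_Ksupp_sigma[OF assms(1)] assms(2)])
qed

lemma div_neg_sum: "(0::int) < a \<Longrightarrow> k div a + (- k) div a = (if a dvd k then 0 else -1)"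
  by (auto simp: zdiv_zminus1_eq_if dvd_eq_mod_eq_0)

definition eK :: "nat \<Rightarrow> int \<times> int \<times> int \<Rightarrow> int" where
  "eK n w = (\<Sum>j\<in>{1..3}. cmp w j div int (aw n j)) + 1"

lemma eulerK_evl: "eulerK n c = evl (eK n) c"
  by (simp add: eulerK_def evl_def eK_def)

lemma int_pair_sum:
  assumes "finite (Ksupp a)" "finite (Ksupp c)"
  shows "int_pair n a c = (\<Sum>u\<in>Ksupp a. \<Sum>v\<in>Ksupp c. a u * c v * (eK n (v - u) + eK n (u - v)))"
proof -
  have 1: "euler_pair n a c = (\<Sum>u\<in>Ksupp a. \<Sum>v\<in>Ksupp c. a u * c v * eK n (v - u))"
    unfolding euler_pair_def eulerK_evl
    by (simp add: Kmult_sum finite_Ksupp_Kdual assms sum_Kdual Kdual_eq)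
  have 2: "euler_pair n c a = (\<Sum>u\<in>Ksupp a. \<Sum>v\<in>Ksupp c. a u * c v * eK n (u - v))"
    unfolding euler_pair_def eulerK_evl
    by (simp add: Kmult_sum finite_Ksupp_Kdual assms sum_Kdual Kdual_eq sum.swap[of _ "Ksupp c"] mult_ac)
  show ?thesis unfolding int_pair_def 1 2 by (simp add: sum.distrib ring_distribs)
qed

lemma cmp_diff: "cmp (u - v) j = cmp u j - cmp v j"
  by (simp add: cmp_def)

lemma cmp_uminus: "cmp (- w) j = - cmp w j"
  by (cases w) (simp add: cmp_def)

lemma aw_pos: "3 \<le> n \<Longrightarrow> 0 < aw n j"
  by (simp add: aw_def)

lemma eK_sym:
  assumes "3 \<le> n"
  shows "eK n w + eK n (- w) = -1 + (\<Sum>j\<in>{1..3}. if int (aw n j) dvd cmp w j then 1 else 0)"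
proof -
  have "eK n w + eK n (- w) = 2 + (\<Sum>j\<in>{1..3}. cmp w j div int (aw n j) + (- cmp w j) div int (aw n j))"
    by (simp add: eK_def sum.distrib cmp_uminus)
  also have "\<dots> = 2 + (\<Sum>j\<in>{1..3}. if int (aw n j) dvd cmp w j then 0 else -1)"
    using aw_pos[OF assms] by (simp add: div_neg_sum)
  also have "\<dots> = -1 + (\<Sum>j\<in>{1..3}. if int (aw n j) dvd cmp w j then 1 else 0)"
    by (simp add: numeral_3_eq_3 atLeastAtMostSuc_conv)
  finally show ?thesis .
qed



lemma exp_root_eq_1:
  assumes "0 < N"
  shows "exp (2 * pi * \<i> * of_int k / of_nat N) = 1 \<longleftrightarrow> int N dvd k"
proof -
  have "exp (2 * pi * \<i> * of_int k / of_nat N) = 1 \<longleftrightarrow> (\<exists>m::int. 2 * pi * k / N = of_int (2 * m) * pi)"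
    by (simp add: exp_eq_1)
  also have "\<dots> \<longleftrightarrow> (\<exists>m::int. real_of_int k = of_int m * N)"
    using assms by (auto simp: field_simps)
  also have "\<dots> \<longleftrightarrow> int N dvd k"
    by (auto simp: dvd_def mult.commute) (metis of_int_mult of_int_eq_iff of_int_of_nat_eq)+
  finally show ?thesis .
qed

lemma exp_2pi_int: "exp (2 * pi * \<i> * of_int k) = 1"
  using exp_integer_2pi[of "of_int k"] by (simp add: mult_ac)

lemma geom_root:
  fixes z :: complex
  assumes "z ^ N = 1"
  shows "(\<Sum>p<N. z ^ p) = (if z = 1 then of_nat N else 0)"
  using assms by (simp add: sum_gp_strict)

lemma RU:
  assumes "0 < N"
  shows "(\<Sum>p<N. exp (2 * pi * \<i> * of_nat p * of_int k / of_nat N)) = (if int N dvd k then of_nat N else 0)"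
proof -
  define z where "z = exp (2 * pi * \<i> * of_int k / of_nat N)"
  have e: "exp (2 * pi * \<i> * of_nat p * of_int k / of_nat N) = z ^ p" for p
    unfolding z_def by (subst exp_of_nat_mult[symmetric]) (simp add: mult_ac)
  have a: "2 * pi * \<i> * of_nat N * of_int k / of_nat N = 2 * pi * \<i> * (of_int k :: complex)"
    using assms by simp
  have zN: "z ^ N = 1" unfolding e[symmetric] a by (rule exp_2pi_int)
  have "(\<Sum>p<N. exp (2 * pi * \<i> * of_nat p * of_int k / of_nat N)) = (\<Sum>p<N. z ^ p)"
    by (simp only: e)
  also have "\<dots> = (if z = 1 then of_nat N else 0)" by (rule geom_root[OF zN])
  finally show ?thesis by (simp only: z_def exp_root_eq_1[OF assms])
qed

lemma RU1:
  assumes "0 < N"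
  shows "(\<Sum>s\<in>{1..N}. exp (2 * pi * \<i> * of_nat s * of_int k / of_nat N)) = (if int N dvd k then of_nat N else 0)"
proof -
  define z where "z = exp (2 * pi * \<i> * of_int k / of_nat N)"
  have e: "exp (2 * pi * \<i> * of_nat p * of_int k / of_nat N) = z ^ p" for p
    unfolding z_def by (subst exp_of_nat_mult[symmetric]) (simp add: mult_ac)
  have a: "2 * pi * \<i> * of_nat N * of_int k / of_nat N = 2 * pi * \<i> * (of_int k :: complex)"
    using assms by simp
  have zN: "z ^ N = 1" unfolding e[symmetric] a by (rule exp_2pi_int)
  have "(\<Sum>s\<in>{1..N}. z ^ s) = (\<Sum>p<N. z ^ Suc p)"
    by (rule sum.reindex_bij_witness[of _ Suc "\<lambda>s. s - 1"]) auto
  also have "\<dots> = z * (\<Sum>p<N. z ^ p)" by (simp add: sum_distrib_left)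
  also have "\<dots> = (if z = 1 then of_nat N else 0)" by (simp add: geom_root[OF zN])
  finally show ?thesis unfolding e z_def exp_root_eq_1[OF assms] .
qed

definition psi :: "nat \<Rightarrow> nat \<Rightarrow> nat \<Rightarrow> int \<times> int \<times> int \<Rightarrow> complex" where
  "psi n j p m = exp (- 2 * pi * \<i> * of_nat p * of_int (cmp m j) / of_nat (aw n j))"
definition phi :: "nat \<Rightarrow> nat \<Rightarrow> nat \<Rightarrow> int \<times> int \<times> int \<Rightarrow> complex" where
  "phi n j p m = exp (2 * pi * \<i> * of_nat p * of_int (cmp m j) / of_nat (aw n j))"

lemma cmp_add: "cmp (u + v) j = cmp u j + cmp v j"
  by (simp add: cmp_def)

lemma psi_mult: "psi n j p (u + v) = psi n j p u * psi n j p v"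
  by (simp only: psi_def cmp_add of_int_add distrib_left add_divide_distrib exp_add)
lemma phi_mult: "phi n j p (u + v) = phi n j p u * phi n j p v"
  by (simp only: phi_def cmp_add of_int_add distrib_left add_divide_distrib exp_add)

lemma chiK_evl: "chiK n j p c = evl (psi n j p) c"
  by (simp add: chiK_def evl_def psi_def)

lemma rk_evl: "of_int (rk c) = evl (\<lambda>_. 1) c"
  by (simp add: rk_def evl_def)

lemma ind_RU:
  assumes "0 < a"
  shows "(if int a dvd k then 1 else 0 :: complex)
     = (1 / of_nat a) * (\<Sum>p<a. exp (2 * pi * \<i> * of_nat p * of_int k / of_nat a))"
  using assms RU[OF assms, of k] by simp



lemma quad_swap:
  "(\<Sum>u\<in>U. \<Sum>v\<in>V. \<Sum>j\<in>J. \<Sum>p\<in>P j. f u v j p) = (\<Sum>j\<in>J. \<Sum>p\<in>P j. \<Sum>u\<in>U. \<Sum>v\<in>V. f u v j p)"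
proof -
  have "(\<Sum>u\<in>U. \<Sum>v\<in>V. \<Sum>j\<in>J. \<Sum>p\<in>P j. f u v j p) = (\<Sum>u\<in>U. \<Sum>j\<in>J. \<Sum>v\<in>V. \<Sum>p\<in>P j. f u v j p)"
    by (rule sum.cong[OF refl]) (rule sum.swap)
  also have "\<dots> = (\<Sum>j\<in>J. \<Sum>u\<in>U. \<Sum>v\<in>V. \<Sum>p\<in>P j. f u v j p)"
    by (rule sum.swap)
  also have "\<dots> = (\<Sum>j\<in>J. \<Sum>u\<in>U. \<Sum>p\<in>P j. \<Sum>v\<in>V. f u v j p)"
    by (rule sum.cong[OF refl], rule sum.cong[OF refl]) (rule sum.swap)
  also have "\<dots> = (\<Sum>j\<in>J. \<Sum>p\<in>P j. \<Sum>u\<in>U. \<Sum>v\<in>V. f u v j p)"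
    by (rule sum.cong[OF refl]) (rule sum.swap)
  finally show ?thesis .
qed

lemma psi_phi:
  assumes "3 \<le> n"
  shows "exp (2 * pi * \<i> * of_nat p * of_int (cmp (v - u) j) / of_nat (aw n j)) = psi n j p u * phi n j p v"
proof -
  have "of_nat (aw n j) \<noteq> (0::complex)" using aw_pos[OF assms] by simp
  then have "2 * pi * \<i> * of_nat p * of_int (cmp (v - u) j) / of_nat (aw n j)
     = - 2 * pi * \<i> * of_nat p * of_int (cmp u j) / of_nat (aw n j) + 2 * pi * \<i> * of_nat p * of_int (cmp v j) / of_nat (aw n j)"
    by (simp add: cmp_diff field_simps)
  then show ?thesis by (simp add: psi_def phi_def exp_add[symmetric])
qed

lemma eK_char:
  assumes "3 \<le> n"
  shows "(of_int (eK n (v - u) + eK n (u - v)) :: complex)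
     = -1 + (\<Sum>j\<in>{1..3}. (1 / of_nat (aw n j)) * (\<Sum>p<aw n j. psi n j p u * phi n j p v))"
proof -
  have "eK n (v - u) + eK n (u - v) = eK n (v - u) + eK n (- (v - u))" by simp
  also have "\<dots> = -1 + (\<Sum>j\<in>{1..3}. if int (aw n j) dvd cmp (v - u) j then 1 else 0)"
    by (rule eK_sym[OF assms])
  finally have "(of_int (eK n (v - u) + eK n (u - v)) :: complex) = -1 + (\<Sum>j\<in>{1..3}. if int (aw n j) dvd cmp (v - u) j then 1 else 0)"
    by (simp add: of_int_sum) (intro sum.cong; auto)
  also have "\<dots> = -1 + (\<Sum>j\<in>{1..3}. (1 / of_nat (aw n j)) * (\<Sum>p<aw n j. psi n j p u * phi n j p v))"
    by (simp only: ind_RU[OF aw_pos[OF assms]] psi_phi[OF assms])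
  finally show ?thesis .
qed

lemma int_pair_char:
  assumes n: "3 \<le> n" and fa: "finite (Ksupp a)" and fc: "finite (Ksupp c)"
  shows "(of_int (int_pair n a c) :: complex) = - (of_int (rk a) * of_int (rk c))
     + (\<Sum>j\<in>{1..3}. \<Sum>p<aw n j. (1 / of_nat (aw n j)) * (chiK n j p a * evl (phi n j p) c))"
proof -
  have "(of_int (int_pair n a c) :: complex) = (\<Sum>u\<in>Ksupp a. \<Sum>v\<in>Ksupp c. of_int (a u) * of_int (c v) *
       (-1 + (\<Sum>j\<in>{1..3}. (1 / of_nat (aw n j)) * (\<Sum>p<aw n j. psi n j p u * phi n j p v))))"
  proof -
    have pw: "\<And>u v. (of_int (a u * c v * (eK n (v - u) + eK n (u - v))) :: complex) = of_int (a u) * of_int (c v) *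
       (-1 + (\<Sum>j\<in>{1..3}. (1 / of_nat (aw n j)) * (\<Sum>p<aw n j. psi n j p u * phi n j p v)))"
      by (simp only: of_int_mult eK_char[OF n])
    show ?thesis by (simp only: int_pair_sum[OF fa fc] of_int_sum pw)
  qed
  also have "\<dots> = (\<Sum>u\<in>Ksupp a. \<Sum>v\<in>Ksupp c. - (of_int (a u) * of_int (c v)))
      + (\<Sum>u\<in>Ksupp a. \<Sum>v\<in>Ksupp c. \<Sum>j\<in>{1..3}. \<Sum>p<aw n j.
          (1 / of_nat (aw n j)) * ((of_int (a u) * psi n j p u) * (of_int (c v) * phi n j p v)))"
    by (simp add: sum.distrib[symmetric] ring_distribs sum_distrib_left mult_ac)
  also have "\<dots> = - (of_int (rk a) * of_int (rk c))
     + (\<Sum>j\<in>{1..3}. \<Sum>p<aw n j. (1 / of_nat (aw n j)) * (chiK n j p a * evl (phi n j p) c))"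
    unfolding quad_swap sum_negf rk_evl chiK_evl evl_def sum_product mult_1_right
    by (simp only: sum_distrib_left)
  finally show ?thesis .
qed



lemma exp_2pi_nat: "exp (2 * pi * \<i> * of_nat k) = 1"
  using exp_2pi_int[of "int k"] by simp

lemma aux_cancel: "of_nat N \<noteq> (0::complex) \<Longrightarrow> 2 * pi * \<i> * of_nat p * of_int (int N) / of_nat N = 2 * pi * \<i> * (of_nat p :: complex)"
  by simp

lemma phi_tangent:
  assumes n: "3 \<le> n" and j: "j \<in> {1..3}"
  shows "evl (phi n j p) (tangent n) = exp (2 * pi * \<i> * of_nat p / of_nat (aw n j))"
proof -
  have "j = 1 \<or> j = 2 \<or> j = 3" using j by auto
  moreover
  have "phi n 1 p (int (n - 2), 0, 0) = 1"
  proof -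
    have "of_nat (n - 2) \<noteq> (0::complex)"
    proof -
      have "n - 2 \<noteq> 0" using n by simp
      then show ?thesis by (simp only: of_nat_eq_0_iff not_False_eq_True)
    qed
    then have "2 * pi * \<i> * of_nat p * of_int (int (n - 2)) / of_nat (n - 2) = 2 * pi * \<i> * (of_nat p :: complex)"
      by (rule aux_cancel)
    then show ?thesis
      by (simp only: phi_def cmp_def aw_def simp_thms(6) if_True fst_conv exp_2pi_nat)
  qed
  ultimately show ?thesis
    by (auto simp: evl_tangent phi_def cmp_def aw_def)
qed

lemma one_tangent: "evl (\<lambda>_. 1::complex) (tangent n) = 1"
  by (simp add: evl_tangent)

lemma phi_chiK:
  assumes n: "3 \<le> n" and p: "p \<le> aw n j"
  shows "evl (phi n j p) b = chiK n j (aw n j - p) b"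
  unfolding chiK_evl evl_def
proof (rule sum.cong[OF refl])
  fix m
  have a: "of_nat (aw n j) \<noteq> (0::complex)" using aw_pos[OF n] by simp
  have "- 2 * pi * \<i> * of_nat (aw n j - p) * of_int (cmp m j) / of_nat (aw n j)
      = 2 * pi * \<i> * of_nat p * of_int (cmp m j) / of_nat (aw n j) + 2 * pi * \<i> * of_int (- cmp m j)"
    using a p by (simp add: of_nat_diff field_simps)
  then have "psi n j (aw n j - p) m = phi n j p m"
    by (simp only: psi_def phi_def exp_add exp_2pi_int mult_1_right)
  then show "of_int (b m) * phi n j p m = of_int (b m) * psi n j (aw n j - p) m" by simp
qed

lemma inv_aw_sum:
  assumes n: "3 \<le> n"
  shows "(\<Sum>j\<in>{1..3}. 1 / of_nat (aw n j) :: complex) = 1 / of_nat (n - 2) + 1"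
  by (simp add: numeral_3_eq_3 atLeastAtMostSuc_conv aw_def)

lemma c_formula:
  assumes n: "3 \<le> n" and fa: "finite (Ksupp a)" and fb: "finite (Ksupp b)"
  shows "(of_int (int_pair n a (sigmaK n s b)) :: complex) = of_int (rk a * rk b) / of_nat (n - 2)
    + (\<Sum>(j, p)\<in>twisted n. (1 / of_nat (aw n j)) *
        (chiK n j p a * (exp (2 * pi * \<i> * of_nat p / of_nat (aw n j)) ^ s * chiK n j (aw n j - p) b)))"
proof -
  have fs: "finite (Ksupp (sigmaK n s b))" by (rule finite_Ksupp_sigma[OF fb])
  have rks: "(of_int (rk (sigmaK n s b)) :: complex) = of_int (rk b)"
    unfolding rk_evl by (simp add: evl_sigma[OF fb] one_tangent)
  have phis: "evl (phi n j p) (sigmaK n s b) = exp (2 * pi * \<i> * of_nat p / of_nat (aw n j)) ^ s * chiK n j (aw n j - p) b"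
    if "j \<in> {1..3}" "p < aw n j" for j p
    by (simp only: evl_sigma[OF fb phi_mult] phi_tangent[OF n that(1)] phi_chiK[OF n less_imp_le[OF that(2)]])
  have split: "{..<aw n j} = insert 0 {1..<aw n j}" for j using aw_pos[OF n, of j] by auto
  have chi0: "chiK n j 0 a = of_int (rk a)" for j by (simp add: chiK_def rk_def)
  have phi0: "evl (phi n j 0) c = of_int (rk c)" for j c by (simp add: phi_def evl_def rk_def)
  have "(of_int (int_pair n a (sigmaK n s b)) :: complex) = - (of_int (rk a) * of_int (rk b))
     + (\<Sum>j\<in>{1..3}. (1 / of_nat (aw n j)) * (of_int (rk a) * of_int (rk b))
         + (\<Sum>p\<in>{1..<aw n j}. (1 / of_nat (aw n j)) * (chiK n j p a * evl (phi n j p) (sigmaK n s b))))"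
    unfolding int_pair_char[OF n fa fs] rks
    by (rule arg_cong[where f="\<lambda>x. _ + x"], rule sum.cong[OF refl])
       (simp add: split chi0 phi0 rks)
  also have "\<dots> = of_int (rk a) * of_int (rk b) * ((\<Sum>j\<in>{1..3}. 1 / of_nat (aw n j)) - 1)
     + (\<Sum>j\<in>{1..3}. \<Sum>p\<in>{1..<aw n j}. (1 / of_nat (aw n j)) *
        (chiK n j p a * (exp (2 * pi * \<i> * of_nat p / of_nat (aw n j)) ^ s * chiK n j (aw n j - p) b)))"
    by (simp add: sum.distrib sum_distrib_left sum_distrib_right algebra_simps phis)
  also have "\<dots> = of_int (rk a * rk b) / of_nat (n - 2)
    + (\<Sum>(j, p)\<in>twisted n. (1 / of_nat (aw n j)) *
        (chiK n j p a * (exp (2 * pi * \<i> * of_nat p / of_nat (aw n j)) ^ s * chiK n j (aw n j - p) b)))"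
    unfolding inv_aw_sum[OF n] by (simp add: twisted_def sum.Sigma)
  finally show ?thesis .
qed



lemma Ln_one_minus_series:
  fixes w :: complex
  assumes "norm w < 1"
  shows "(\<lambda>N. - (w ^ N / of_nat N)) sums Ln (1 - w)"
  using Ln_series'[of "- w"] assms by simp

lemma norm_term_bound:
  fixes y :: complex
  assumes "norm y < 1" "0 < K"
  shows "norm (of_nat K * y ^ (K * m + r) / of_nat (K * m + r)) \<le> of_nat K * norm y ^ m"
proof (cases "K * m + r = 0")
  case True then show ?thesis by (simp only: True of_nat_0 div_by_0 norm_zero) simp
next
  case False
  have "norm y ^ (K * m + r) \<le> norm y ^ m"
  proof (rule power_decreasing)
    have "m \<le> K * m" using assms(2) by (metis One_nat_def Suc_leI mult_1 mult_le_mono1)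
    then show "m \<le> K * m + r" by (rule trans_le_add1)
  qed (use assms in auto)
  moreover have "1 \<le> real (K * m + r)" using False by linarith
  moreover have "norm y ^ (K * m + r) / real (K * m + r) \<le> norm y ^ (K * m + r)"
    using \<open>1 \<le> real (K * m + r)\<close>
    by (simp add: divide_le_eq mult_le_cancel_left1 mult_le_cancel_left2)
  ultimately have "norm y ^ (K * m + r) / real (K * m + r) \<le> norm y ^ m"
    by linarith
  then have "real K * (norm y ^ (K * m + r) / real (K * m + r)) \<le> real K * norm y ^ m"
    by (rule mult_left_mono) simp
  moreover have "norm (of_nat K * y ^ (K * m + r) / of_nat (K * m + r) :: complex)
      = real K * (norm y ^ (K * m + r) / real (K * m + r))"
    by (simp only: norm_divide norm_mult norm_power norm_of_nat times_divide_eq_right)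
  ultimately show ?thesis by simp
qed

lemma L_lemma:
  fixes y :: complex
  assumes K: "0 < K" and r: "r < K" and y: "norm y < 1"
  shows "((\<lambda>m. of_nat K * y ^ (K * m + r) / of_nat (K * m + r)) has_sum
     - (\<Sum>s\<in>{1..K}. exp (2 * pi * \<i> * of_nat s * of_int (int r) / of_nat K)
          * Ln (1 - exp (2 * pi * \<i> * of_nat s * of_int (-1) / of_nat K) * y))) UNIV"
proof -
  define c where "c s = exp (2 * pi * \<i> * of_nat s * of_int (int r) / of_nat K)" for s
  define e where "e s = exp (2 * pi * \<i> * of_nat s * of_int (-1) / of_nat K)" for s
  have ne: "norm (e s) = 1" for s by (simp add: e_def norm_exp_eq_Re)
  have "(\<lambda>N. c s * - ((e s * y) ^ N / of_nat N)) sums (c s * Ln (1 - e s * y))" for s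
    by (rule sums_mult, rule Ln_one_minus_series) (simp add: norm_mult ne y)
  then have "(\<lambda>N. \<Sum>s\<in>{1..K}. c s * - ((e s * y) ^ N / of_nat N)) sums (\<Sum>s\<in>{1..K}. c s * Ln (1 - e s * y))"
    by (rule sums_sum)
  moreover have "(\<Sum>s\<in>{1..K}. c s * - ((e s * y) ^ N / of_nat N))
      = - ((if int K dvd (int r - int N) then of_nat K else 0) * y ^ N / of_nat N)" for N
  proof -
    have ce: "c s * e s ^ N = exp (2 * pi * \<i> * of_nat s * of_int (int r - int N) / of_nat K)" for s
      unfolding c_def e_def exp_of_nat_mult[symmetric] exp_add[symmetric]
      by (rule arg_cong[where f=exp]) (use K in \<open>simp add: field_simps\<close>)
    have pw: "c s * - ((e s * y) ^ N / of_nat N) = - ((c s * e s ^ N) * (y ^ N / of_nat N))" for s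
      by (simp add: power_mult_distrib mult_ac)
    have "(\<Sum>s\<in>{1..K}. c s * - ((e s * y) ^ N / of_nat N)) = - ((\<Sum>s\<in>{1..K}. c s * e s ^ N) * (y ^ N / of_nat N))"
      by (simp only: pw sum_negf sum_distrib_right)
    also have "\<dots> = - ((if int K dvd (int r - int N) then of_nat K else 0) * (y ^ N / of_nat N))"
      by (simp only: ce RU1[OF K])
    also have "\<dots> = - ((if int K dvd (int r - int N) then of_nat K else 0) * y ^ N / of_nat N)"
      by (simp only: times_divide_eq_right)
    finally show ?thesis .
  qed
  ultimately have S: "(\<lambda>N. - ((if int K dvd (int r - int N) then of_nat K else 0) * y ^ N / of_nat N))
      sums (\<Sum>s\<in>{1..K}. c s * Ln (1 - e s * y))" by simp
  define g where "g m = K * m + r" for m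
  have sm: "strict_mono g" using K by (auto simp: strict_mono_def g_def)
  have z: "- ((if int K dvd (int r - int N) then of_nat K else 0) * y ^ N / of_nat N) = 0"
    if "N \<notin> range g" for N
  proof -
    have "\<not> int K dvd (int r - int N)"
    proof
      assume "int K dvd (int r - int N)"
      then have "int N mod int K = int r mod int K" by (simp add: mod_eq_dvd_iff dvd_diff_commute)
      then have "N mod K = r" using r by (simp add: zmod_int[symmetric])
      then have "N = g (N div K)" unfolding g_def by (metis div_mult_mod_eq mult.commute)
      then show False using that by auto
    qed
    then show ?thesis by simp
  qed
  have "(\<lambda>m. - ((if int K dvd (int r - int (g m)) then of_nat K else 0) * y ^ g m / of_nat (g m)))
      sums (\<Sum>s\<in>{1..K}. c s * Ln (1 - e s * y))"
    using sums_mono_reindex[OF sm, of "\<lambda>N. - ((if int K dvd (int r - int N) then of_nat K else 0) * y ^ N / of_nat N)"] z S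
    by blast
  then have "(\<lambda>m. - (of_nat K * y ^ (K * m + r) / of_nat (K * m + r))) sums (\<Sum>s\<in>{1..K}. c s * Ln (1 - e s * y))"
    by (simp add: g_def)
  from sums_minus[OF this] have sums: "(\<lambda>m. of_nat K * y ^ (K * m + r) / of_nat (K * m + r)) sums - (\<Sum>s\<in>{1..K}. c s * Ln (1 - e s * y))"
    by simp
  have summ: "summable (\<lambda>m. norm (of_nat K * y ^ (K * m + r) / of_nat (K * m + r) :: complex))"
  proof (rule summable_comparison_test)
    show "\<exists>N. \<forall>m\<ge>N. norm (norm (of_nat K * y ^ (K * m + r) / of_nat (K * m + r))) \<le> of_nat K * norm y ^ m"
      using norm_term_bound[OF y K] by auto
    show "summable (\<lambda>m. real K * norm y ^ m)"
      by (rule summable_mult, rule summable_geometric) (use y in simp)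
  qed
  show ?thesis using norm_summable_imp_has_sum[OF summ sums] by (simp add: c_def e_def)
qed



lemma Dlam_deriv:
  assumes "\<And>t. (f has_field_derivative f' t) (at t)"
  shows "Dlam f = (\<lambda>t. exp (- t) * f' t)"
  using assms by (simp add: Dlam_def DERIV_imp_deriv fun_eq_iff)

lemma Dlam_exp: "Dlam (\<lambda>s. c * exp (d * s)) = (\<lambda>s. c * d * exp ((d - 1) * s))"
proof -
  have "Dlam (\<lambda>s. c * exp (d * s)) = (\<lambda>t. exp (- t) * (c * (exp (d * t) * d)))"
    by (rule Dlam_deriv) (auto intro!: derivative_eq_intros)
  also have "\<dots> = (\<lambda>s. c * d * exp ((d - 1) * s))"
    by (rule ext) (simp add: algebra_simps exp_diff exp_minus field_simps)
  finally show ?thesis .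
qed

lemma Dlam_pow_exp:
  "(Dlam ^^ k) (\<lambda>s. c * exp (d * s)) = (\<lambda>s. c * (\<Prod>i<k. d - of_nat i) * exp ((d - of_nat k) * s))"
proof (induction k)
  case 0 then show ?case by simp
next
  case (Suc k)
  have "(Dlam ^^ Suc k) (\<lambda>s. c * exp (d * s)) = Dlam (\<lambda>s. c * (\<Prod>i<k. d - of_nat i) * exp ((d - of_nat k) * s))"
    by (simp add: Suc.IH)
  also have "\<dots> = (\<lambda>s. (c * (\<Prod>i<k. d - of_nat i)) * (d - of_nat k) * exp ((d - of_nat k - 1) * s))"
    by (rule Dlam_exp)
  also have "\<dots> = (\<lambda>s. c * (\<Prod>i<Suc k. d - of_nat i) * exp ((d - of_nat (Suc k)) * s))"
    by (rule ext) (simp add: algebra_simps)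
  finally show ?case .
qed

lemma Ipos_00: "Ipos n logQ c m t (0, 0) = of_int (rk c) * (\<Prod>i<Suc m. 1 - of_nat i) * exp ((1 - of_nat (Suc m)) * t)"
proof -
  have "(\<lambda>s. Ineg n logQ c 0 s (0, 0)) = (\<lambda>s. of_int (rk c) * exp (1 * s))"
    by (simp add: Ineg_def)
  then show ?thesis by (simp only: Ipos_def Dlam_pow_exp)
qed

lemma Ipos_01:
  assumes n: "3 \<le> n"
  shows "Ipos n logQ c m t (0, 1) = of_int (rk c) / of_nat (n - 2) * (\<Prod>i<m. - 1 - of_nat i) * exp ((- 1 - of_nat m) * t)"
proof -
  have nz: "(of_nat n :: complex) \<noteq> 2"
  proof
    assume "(of_nat n :: complex) = 2"
    then have "(of_nat n :: complex) = of_nat 2" by simp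
    then have "n = 2" by (simp only: of_nat_eq_iff)
    with n show False by simp
  qed
  have d: "Dlam (\<lambda>s. Ineg n logQ c 0 s (0, 1)) = (\<lambda>s. of_int (rk c) / of_nat (n - 2) * exp ((- 1) * s))"
    by (rule trans[OF Dlam_deriv[where f' = "\<lambda>_. of_int (rk c) / of_nat (n - 2)"]])
       (use n nz in \<open>auto simp: Ineg_def intro!: derivative_eq_intros\<close>)
  show ?thesis
    unfolding Ipos_def funpow_Suc_right comp_def d Dlam_pow_exp by simp
qed

lemma Ipos_tw:
  assumes "(j, p) \<in> twisted n"
  shows "Ipos n logQ c m t (j, p) = chiK n j p c / (1 - of_nat p / of_nat (aw n j))
     * (\<Prod>i<Suc m. (1 - of_nat p / of_nat (aw n j)) - of_nat i)
     * exp (((1 - of_nat p / of_nat (aw n j)) - of_nat (Suc m)) * t)"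
proof -
  have j: "j \<ge> 1" using assms by (auto simp: twisted_def)
  have "(\<lambda>s. Ineg n logQ c 0 s (j, p)) = (\<lambda>s. chiK n j p c / (1 - of_nat p / of_nat (aw n j)) * exp ((1 - of_nat p / of_nat (aw n j)) * s))"
    using assms j by (auto simp: Ineg_def fun_eq_iff)
  then show ?thesis by (simp only: Ipos_def Dlam_pow_exp)
qed



lemma neg1_sq: "(-1::complex) ^ m * (-1) ^ m = 1"
  by (simp add: power_add[symmetric])

lemma prod_neg_fact: "(\<Prod>i<m. - 1 - of_nat i :: complex) = (-1) ^ m * fact m"
  by (induction m) (simp_all add: algebra_simps)

lemma P1: "(\<Prod>i<Suc m. (1 - q) - of_nat i :: complex) = (1 - q) * (-1) ^ m * pochhammer q m"
proof (induction m)
  case 0 then show ?case by simp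
next
  case (Suc m)
  have "(\<Prod>i<Suc (Suc m). (1 - q) - of_nat i :: complex) = (1 - q) * (-1) ^ m * pochhammer q m * ((1 - q) - of_nat (Suc m))"
    by (simp only: prod.lessThan_Suc[of _ "Suc m"] Suc.IH)
  also have "\<dots> = (1 - q) * (-1) ^ Suc m * pochhammer q (Suc m)"
    by (simp only: pochhammer_Suc power_Suc) (simp add: algebra_simps)
  finally show ?case .
qed

lemma P2: "(\<Prod>k\<in>{1..Suc m}. of_nat k - (1 - q) :: complex) = pochhammer q (Suc m)"
proof -
  have "(\<Prod>k\<in>{1..Suc m}. of_nat k - (1 - q) :: complex) = (\<Prod>i<Suc m. q + of_nat i)"
    by (rule prod.reindex_bij_witness[of _ Suc "\<lambda>k. k - 1"]) (auto simp: algebra_simps)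
  then show ?thesis by (simp add: pochhammer_prod atLeast0LessThan)
qed

lemma n2_nz: "3 \<le> n \<Longrightarrow> (of_nat (n - 2) :: complex) \<noteq> 0"
proof -
  assume "3 \<le> n"
  then have "n - 2 \<noteq> 0" by simp
  then show ?thesis by (simp only: of_nat_eq_0_iff not_False_eq_True)
qed

definition C0 :: "nat \<Rightarrow> complex \<Rightarrow> Kel \<Rightarrow> Kel \<Rightarrow> complex \<Rightarrow> complex" where
  "C0 n logQ a b t2 = - 2 * pi * \<i> * of_int (rk a) * of_real (degK n b)
      + of_int (rk a * rk b) * (logQ - t2 / of_nat (n - 2))"

lemma H1:
  assumes n: "3 \<le> n"
  shows "(-1) ^ Suc m * (Ipos n logQ a m t1 (0, 0) * Ineg n logQ b m t2 (0, 1))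
     = (if m = 0 then C0 n logQ a b t2 else 0)"
proof (cases m)
  case 0
  have nz: "(of_nat (n - 2) :: complex) \<noteq> 0" by (rule n2_nz[OF n])
  have nz2: "(of_nat n :: complex) - 2 \<noteq> 0" using nz n by (simp add: of_nat_diff)
  show ?thesis using 0 nz nz2
    by (simp add: Ipos_00 Ineg_def C0_def field_simps)
next
  case (Suc k)
  have "(\<Prod>i<Suc m. 1 - of_nat i :: complex) = 0"
    by (subst prod_zero_iff) (auto simp: Suc intro!: bexI[of _ 1])
  then show ?thesis by (simp add: Ipos_00 Suc)
qed

lemma alg2a:
  fixes A B N e1 e2 F M s :: complex
  assumes "N \<noteq> 0" "F \<noteq> 0" "M \<noteq> 0" "s * s = 1"
  shows "- s * (A / N * (s * F) * e1 * (B * e2 / (M * F))) = - (A * B / N) * (e1 * e2 / M)"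
  using assms by (simp add: field_simps)

lemma alg2:
  fixes A B N e1 e2 :: complex
  assumes "N \<noteq> 0"
  shows "(-1) ^ Suc m * (A / N * ((-1) ^ m * fact m) * e1 * (B * e2 / fact (m + 1)))
     = - (A * B / N) * (e1 * e2 / of_nat (Suc m))"
proof -
  have f: "(fact (m + 1) :: complex) = of_nat (Suc m) * fact m" by (simp del: of_nat_Suc)
  have "(fact m :: complex) \<noteq> 0" by simp
  moreover have "(of_nat (Suc m) :: complex) \<noteq> 0" by (simp only: of_nat_eq_0_iff nat.simps(3) not_False_eq_True)
  ultimately show ?thesis unfolding f power_Suc using alg2a[OF assms, of "fact m" "of_nat (Suc m)" "(-1)^m"] neg1_sq[of m]
    by simp
qed

lemma H2:
  assumes n: "3 \<le> n"
  shows "(-1) ^ Suc m * (Ipos n logQ a m t1 (0, 1) * Ineg n logQ b m t2 (0, 0))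
     = - (of_int (rk a * rk b) / of_nat (n - 2)) * (exp (of_nat (Suc m) * (t2 - t1)) / of_nat (Suc m))"
proof -
  have E: "exp ((- 1 - of_nat m) * t1) * exp (of_nat (m + 1) * t2) = exp (of_nat (Suc m) * (t2 - t1))"
    by (simp add: exp_add[symmetric] algebra_simps)
  have "(-1) ^ Suc m * (Ipos n logQ a m t1 (0, 1) * Ineg n logQ b m t2 (0, 0))
    = (-1) ^ Suc m * (of_int (rk a) / of_nat (n - 2) * ((-1) ^ m * fact m) * exp ((- 1 - of_nat m) * t1)
       * (of_int (rk b) * exp (of_nat (m + 1) * t2) / fact (m + 1)))"
    unfolding Ipos_01[OF n] by (simp add: prod_neg_fact Ineg_def)
  also have "\<dots> = - (of_int (rk a) * of_int (rk b) / of_nat (n - 2)) * ((exp ((- 1 - of_nat m) * t1) * exp (of_nat (m + 1) * t2)) / of_nat (Suc m))"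
    by (rule alg2[OF n2_nz[OF n]])
  finally show ?thesis unfolding E by simp
qed



lemma alg3:
  fixes ca cb q P e1 e2 A M s :: complex
  assumes "1 - q \<noteq> 0" "P \<noteq> 0" "q + M \<noteq> 0" "A \<noteq> 0" "s * s = 1"
  shows "(- 1 * s) * (ca / (1 - q) * ((1 - q) * s * P) * e1 * (e2 / (P * (q + M)) * cb) / A)
       = - (1 / A * (ca * cb)) * (e1 * e2 / (M + q))"
proof -
  have 1: "ca / (1 - q) * ((1 - q) * s * P) = ca * s * P" using assms(1) by simp
  have 2: "M + q = q + M" by simp
  have "(- 1 * s) * (ca * s * P * e1 * (e2 / (P * (q + M)) * cb) / A) = - (s * s) * (ca * cb * e1 * e2 * (P / P) / (A * (q + M)))"
    by (simp add: mult_ac)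
  also have "\<dots> = - (1 / A * (ca * cb)) * (e1 * e2 / (M + q))"
    using assms(2) by (simp add: assms(5) 2 mult_ac)
  finally show ?thesis unfolding 1 .
qed

lemma tw_mem: "(j, p) \<in> twisted n \<Longrightarrow> 1 \<le> j \<and> j \<le> 3 \<and> 1 \<le> p \<and> p < aw n j"
  by (auto simp: twisted_def)

lemma tw_flip: "(j, p) \<in> twisted n \<Longrightarrow> (j, aw n j - p) \<in> twisted n"
  by (auto simp: twisted_def)

lemma H3:
  assumes n: "3 \<le> n" and tw: "(j, p) \<in> twisted n"
  shows "(-1) ^ Suc m * (Ipos n logQ a m t1 (j, p) * Ineg n logQ b m t2 (j, aw n j - p) / of_nat (aw n j))
     = - (1 / of_nat (aw n j) * (chiK n j p a * chiK n j (aw n j - p) b))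
       * (exp ((of_nat m + of_nat p / of_nat (aw n j)) * (t2 - t1)) / (of_nat m + of_nat p / of_nat (aw n j)))"
proof -
  define q where "q = (of_nat p / of_nat (aw n j) :: complex)"
  from tw_mem[OF tw] have j: "1 \<le> j" and p1: "1 \<le> p" and pa: "p < aw n j" by auto
  have A: "(of_nat (aw n j) :: complex) \<noteq> 0" using aw_pos[OF n] by simp
  have qa: "of_nat (aw n j - p) / of_nat (aw n j) = 1 - q"
    using A pa by (simp add: q_def of_nat_diff field_simps)
  have qr: "q = of_real (real p / real (aw n j))" by (simp add: q_def)
  have qpos: "real p / real (aw n j) > 0" using p1 pa by simp
  have qlt: "real p / real (aw n j) < 1" using pa by simp
  have q1: "1 - q \<noteq> 0"
  proof
    assume "1 - q = 0"
    then have "of_real (real p / real (aw n j)) = (of_real 1 :: complex)" by (simp add: qr)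
    then have "real p / real (aw n j) = 1" by (simp only: of_real_eq_iff)
    with qlt show False by simp
  qed
  have qk: "q + of_nat k \<noteq> 0" for k
  proof
    assume "q + of_nat k = 0"
    then have "of_real (real p / real (aw n j) + real k) = (of_real 0 :: complex)" by (simp add: qr)
    then have "real p / real (aw n j) + real k = 0" by (simp only: of_real_eq_iff)
    with qpos show False by (simp add: add_pos_nonneg)
  qed
  have P: "pochhammer q m \<noteq> 0"
    unfolding pochhammer_eq_0_iff
  proof
    assume "\<exists>k<m. q = - of_nat k"
    then obtain k where "q = - of_nat k" by blast
    then have "q + of_nat k = 0" by simp
    with qk show False by blast
  qed
  have flipmem: "(j, aw n j - p) \<in> twisted n" by (rule tw_flip[OF tw])
  have V: "Ineg n logQ b m t2 (j, aw n j - p)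
      = exp ((of_nat (m + 1) - (1 - q)) * t2) / (pochhammer q m * (q + of_nat m)) * chiK n j (aw n j - p) b"
  proof -
    have "Ineg n logQ b m t2 (j, aw n j - p)
      = exp ((of_nat (m + 1) - (1 - q)) * t2) / (\<Prod>k\<in>{1..Suc m}. of_nat k - (1 - q)) * chiK n j (aw n j - p) b"
      using j flipmem by (simp add: Ineg_def qa)
    then show ?thesis by (simp only: P2 pochhammer_Suc)
  qed
  have U: "Ipos n logQ a m t1 (j, p) = chiK n j p a / (1 - q) * ((1 - q) * (-1) ^ m * pochhammer q m)
       * exp ((1 - q - of_nat (Suc m)) * t1)"
    using Ipos_tw[OF tw, of logQ a m t1, folded q_def] by (simp only: P1)
  have E: "exp ((1 - q - of_nat (Suc m)) * t1) * exp ((of_nat (m + 1) - (1 - q)) * t2) = exp ((of_nat m + q) * (t2 - t1))"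
    by (simp add: exp_add[symmetric] algebra_simps)
  have "(-1) ^ Suc m * (Ipos n logQ a m t1 (j, p) * Ineg n logQ b m t2 (j, aw n j - p) / of_nat (aw n j))
     = - (1 / of_nat (aw n j) * (chiK n j p a * chiK n j (aw n j - p) b))
       * (exp ((1 - q - of_nat (Suc m)) * t1) * exp ((of_nat (m + 1) - (1 - q)) * t2) / (of_nat m + q))"
    unfolding U V power_Suc
    by (rule alg3[OF q1 P qk A neg1_sq])
  from this[unfolded E] show ?thesis by (simp only: q_def)
qed



lemma term_formula:
  assumes n: "3 \<le> n"
  shows "(-1) ^ Suc m * pairH n (Ipos n logQ a m t1) (Ineg n logQ b m t2)
     = (if m = 0 then C0 n logQ a b t2 else 0)
       - (of_int (rk a * rk b) / of_nat (n - 2)) * (exp (of_nat (Suc m) * (t2 - t1)) / of_nat (Suc m))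
       - (\<Sum>(j, p)\<in>twisted n. (1 / of_nat (aw n j) * (chiK n j p a * chiK n j (aw n j - p) b))
           * (exp ((of_nat m + of_nat p / of_nat (aw n j)) * (t2 - t1)) / (of_nat m + of_nat p / of_nat (aw n j))))"
proof -
  have "(-1) ^ Suc m * pairH n (Ipos n logQ a m t1) (Ineg n logQ b m t2)
    = (-1) ^ Suc m * (Ipos n logQ a m t1 (0, 0) * Ineg n logQ b m t2 (0, 1))
      + (-1) ^ Suc m * (Ipos n logQ a m t1 (0, 1) * Ineg n logQ b m t2 (0, 0))
      + (\<Sum>(j, p)\<in>twisted n. (-1) ^ Suc m * (Ipos n logQ a m t1 (j, p) * Ineg n logQ b m t2 (j, aw n j - p) / of_nat (aw n j)))"
    unfolding pairH_def by (simp add: ring_distribs sum_distrib_left case_prod_unfold)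
  also have "\<dots> = (if m = 0 then C0 n logQ a b t2 else 0)
       + (- (of_int (rk a * rk b) / of_nat (n - 2)) * (exp (of_nat (Suc m) * (t2 - t1)) / of_nat (Suc m)))
       + (\<Sum>(j, p)\<in>twisted n. - (1 / of_nat (aw n j) * (chiK n j p a * chiK n j (aw n j - p) b))
           * (exp ((of_nat m + of_nat p / of_nat (aw n j)) * (t2 - t1)) / (of_nat m + of_nat p / of_nat (aw n j))))"
  proof -
    have "(\<Sum>(j, p)\<in>twisted n. (-1) ^ Suc m * (Ipos n logQ a m t1 (j, p) * Ineg n logQ b m t2 (j, aw n j - p) / of_nat (aw n j)))
      = (\<Sum>(j, p)\<in>twisted n. - (1 / of_nat (aw n j) * (chiK n j p a * chiK n j (aw n j - p) b))
           * (exp ((of_nat m + of_nat p / of_nat (aw n j)) * (t2 - t1)) / (of_nat m + of_nat p / of_nat (aw n j))))"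
    proof (rule sum.cong[OF refl])
      fix x assume x: "x \<in> twisted n"
      obtain j p where jp: "x = (j, p)" by (cases x)
      show "(case x of (j, p) \<Rightarrow> (-1) ^ Suc m * (Ipos n logQ a m t1 (j, p) * Ineg n logQ b m t2 (j, aw n j - p) / of_nat (aw n j)))
        = (case x of (j, p) \<Rightarrow> - (1 / of_nat (aw n j) * (chiK n j p a * chiK n j (aw n j - p) b))
           * (exp ((of_nat m + of_nat p / of_nat (aw n j)) * (t2 - t1)) / (of_nat m + of_nat p / of_nat (aw n j))))"
        unfolding jp prod.case by (rule H3[OF n x[unfolded jp]])
    qed
    then show ?thesis by (simp only: H1[OF n] H2[OF n])
  qed
  also have "\<dots> = (if m = 0 then C0 n logQ a b t2 else 0)
       - (of_int (rk a * rk b) / of_nat (n - 2)) * (exp (of_nat (Suc m) * (t2 - t1)) / of_nat (Suc m))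
       - (\<Sum>(j, p)\<in>twisted n. (1 / of_nat (aw n j) * (chiK n j p a * chiK n j (aw n j - p) b))
           * (exp ((of_nat m + of_nat p / of_nat (aw n j)) * (t2 - t1)) / (of_nat m + of_nat p / of_nat (aw n j))))"
    by (simp add: case_prod_unfold sum_negf)
  finally show ?thesis .
qed



lemma has_sum_fsum:
  fixes f :: "'i \<Rightarrow> 'a \<Rightarrow> complex"
  assumes "finite A" "\<And>i. i \<in> A \<Longrightarrow> (f i has_sum x i) B"
  shows "((\<lambda>y. \<Sum>i\<in>A. f i y) has_sum (\<Sum>i\<in>A. x i)) B"
  using assms
proof (induction A rule: finite_induct)
  case empty then show ?case by simp
next
  case (insert i A)
  have "((\<lambda>y. f i y + (\<Sum>i\<in>A. f i y)) has_sum (x i + (\<Sum>i\<in>A. x i))) B"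
    by (rule has_sum_add) (use insert in auto)
  then show ?case using insert by simp
qed

lemma has_sum_Suc_shift:
  fixes f :: "nat \<Rightarrow> complex"
  assumes "f 0 = 0" "(f has_sum x) UNIV"
  shows "((\<lambda>m. f (Suc m)) has_sum x) UNIV"
proof -
  have z: "f k = 0" if "k \<in> UNIV - range Suc" for k
  proof -
    have "k = 0" using that by (metis DiffD2 not0_implies_Suc rangeI)
    then show ?thesis using assms(1) by simp
  qed
  have "(f has_sum x) UNIV \<longleftrightarrow> (f has_sum x) (range Suc)"
    by (rule has_sum_cong_neutral) (use z in auto)
  then have "(f has_sum x) (range Suc)" using assms(2) by simp
  then show ?thesis using has_sum_reindex[of Suc UNIV f x] by (simp add: comp_def)
qed

lemma conv_term:
  fixes d :: complex
  assumes K: "0 < K" and a: "0 < a" and dv: "a dvd K"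
  shows "of_nat K * exp (d / of_nat K) ^ (K * m + (K div a) * p) / of_nat (K * m + (K div a) * p)
       = exp ((of_nat m + of_nat p / of_nat a) * d) / (of_nat m + of_nat p / of_nat a)"
proof -
  define X where "X = (of_nat m + of_nat p / of_nat a :: complex)"
  have Kn: "(of_nat K :: complex) \<noteq> 0" using K by simp
  have an: "(of_nat a :: complex) \<noteq> 0" using a by simp
  have Kda: "(of_nat (K div a) :: complex) = of_nat K / of_nat a"
    using dv an by (metis dvd_div_mult_self nonzero_eq_divide_eq of_nat_mult)
  have N: "(of_nat (K * m + (K div a) * p) :: complex) = of_nat K * X"
    unfolding X_def using Kda an by (simp add: field_simps)
  have "exp (d / of_nat K) ^ (K * m + (K div a) * p) = exp (of_nat (K * m + (K div a) * p) * (d / of_nat K))"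
    by (rule exp_of_nat_mult[symmetric])
  also have "\<dots> = exp (X * d)" unfolding N using Kn by simp
  finally have E: "exp (d / of_nat K) ^ (K * m + (K div a) * p) = exp (X * d)" .
  show ?thesis unfolding E N X_def[symmetric] using Kn
    by (simp add: mult_divide_mult_cancel_left_if)
qed

lemma kappa_pos: "3 \<le> n \<Longrightarrow> 0 < kappa n"
  by (simp add: kappa_def)

lemma aw_dvd_kappa: "aw n j dvd kappa n"
  by (simp add: aw_def kappa_def)

lemma norm_y: 
  assumes "Re d < 0" "0 < K"
  shows "norm (exp (d / of_nat K)) < 1"
  using assms by (simp add: norm_exp_eq_Re divide_neg_pos)

lemma has_sum_tw:
  assumes n: "3 \<le> n" and d: "Re d < 0" and tw: "(j, p) \<in> twisted n"
  shows "((\<lambda>m. exp ((of_nat m + of_nat p / of_nat (aw n j)) * d) / (of_nat m + of_nat p / of_nat (aw n j))) has_sum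
     - (\<Sum>s\<in>{1..kappa n}. exp (2 * pi * \<i> * of_nat s * of_int (int ((kappa n div aw n j) * p)) / of_nat (kappa n))
          * Ln (1 - exp (2 * pi * \<i> * of_nat s * of_int (-1) / of_nat (kappa n)) * exp (d / of_nat (kappa n))))) UNIV"
proof -
  have K: "0 < kappa n" by (rule kappa_pos[OF n])
  have a: "0 < aw n j" by (rule aw_pos[OF n])
  from tw_mem[OF tw] have pa: "p < aw n j" by auto
  have r: "(kappa n div aw n j) * p < kappa n"
  proof -
    have "0 < kappa n div aw n j" using K a aw_dvd_kappa[of n j]
      by (metis dvd_div_mult_self gr0I mult_is_0 neq0_conv)
    then have "(kappa n div aw n j) * p < (kappa n div aw n j) * aw n j" using pa by simp
    also have "\<dots> = kappa n" using aw_dvd_kappa[of n j] by simp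
    finally show ?thesis .
  qed
  from L_lemma[OF K r norm_y[OF d K]] show ?thesis
    by (simp only: conv_term[OF K a aw_dvd_kappa])
qed

lemma has_sum_untw:
  assumes n: "3 \<le> n" and d: "Re d < 0"
  shows "((\<lambda>m. exp (of_nat (Suc m) * d) / of_nat (Suc m)) has_sum
     - (\<Sum>s\<in>{1..kappa n}. exp (2 * pi * \<i> * of_nat s * of_int (int 0) / of_nat (kappa n))
          * Ln (1 - exp (2 * pi * \<i> * of_nat s * of_int (-1) / of_nat (kappa n)) * exp (d / of_nat (kappa n))))) UNIV"
proof -
  have K: "0 < kappa n" by (rule kappa_pos[OF n])
  define V where "V = - (\<Sum>s\<in>{1..kappa n}. exp (2 * pi * \<i> * of_nat s * of_int (int 0) / of_nat (kappa n))
          * Ln (1 - exp (2 * pi * \<i> * of_nat s * of_int (-1) / of_nat (kappa n)) * exp (d / of_nat (kappa n))))"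
  define f where "f m = of_nat (kappa n) * exp (d / of_nat (kappa n)) ^ (kappa n * m + 0) / of_nat (kappa n * m + 0)" for m
  have "(f has_sum V) UNIV"
    unfolding f_def V_def by (rule L_lemma[OF K K norm_y[OF d K]])
  from has_sum_Suc_shift[OF _ this] have "((\<lambda>m. f (Suc m)) has_sum V) UNIV" by (simp add: f_def)
  moreover have "f (Suc m) = exp (of_nat (Suc m) * d) / of_nat (Suc m)" for m
  proof -
    have "f (Suc m) = of_nat (kappa n) * exp (d / of_nat (kappa n)) ^ (kappa n * Suc m + (kappa n div 1) * 0) / of_nat (kappa n * Suc m + (kappa n div 1) * 0)"
      by (simp add: f_def)
    also have "\<dots> = exp ((of_nat (Suc m) + of_nat 0 / of_nat 1) * d) / (of_nat (Suc m) + of_nat 0 / of_nat 1)"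
      by (rule conv_term[OF K]) simp_all
    finally show ?thesis by simp
  qed
  ultimately show ?thesis unfolding V_def by simp
qed



lemma has_sum_delta0:
  "((\<lambda>m::nat. if m = 0 then C else 0) has_sum C) UNIV"
proof -
  have "((\<lambda>m::nat. if m = 0 then C else 0) has_sum C) UNIV \<longleftrightarrow> ((\<lambda>m::nat. if m = 0 then C else 0) has_sum C) {0}"
    by (rule has_sum_cong_neutral) auto
  moreover have "((\<lambda>m::nat. if m = 0 then C else 0) has_sum C) {0}"
    using has_sum_finite[of "{0::nat}" "\<lambda>m::nat. if m = 0 then C else 0"] by simp
  ultimately show ?thesis by simp
qed

lemma eta_powi:
  assumes n: "3 \<le> n"
  shows "eta n powi (- int s) = exp (2 * pi * \<i> * of_nat s * of_int (-1) / of_nat (kappa n))"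
proof -
  have "eta n powi (- int s) = inverse (exp (2 * pi * \<i> / of_nat (kappa n)) ^ s)"
    by (simp add: eta_def power_int_minus)
  also have "\<dots> = inverse (exp (of_nat s * (2 * pi * \<i> / of_nat (kappa n))))"
    by (simp only: exp_of_nat_mult)
  also have "\<dots> = exp (- (of_nat s * (2 * pi * \<i> / of_nat (kappa n))))"
    by (simp add: exp_minus)
  also have "\<dots> = exp (2 * pi * \<i> * of_nat s * of_int (-1) / of_nat (kappa n))"
    by (simp add: field_simps)
  finally show ?thesis .
qed

lemma coef_eq:
  assumes n: "3 \<le> n"
  shows "exp (2 * pi * \<i> * of_nat p / of_nat (aw n j)) ^ s
     = exp (2 * pi * \<i> * of_nat s * of_int (int ((kappa n div aw n j) * p)) / of_nat (kappa n))"
proof -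
  have an: "(of_nat (aw n j) :: complex) \<noteq> 0" using aw_pos[OF n] by simp
  have Kn: "(of_nat (kappa n) :: complex) \<noteq> 0" using kappa_pos[OF n] by simp
  have Kda: "(of_nat (kappa n div aw n j) :: complex) = of_nat (kappa n) / of_nat (aw n j)"
    using aw_dvd_kappa[of n j] an by (metis dvd_div_mult_self nonzero_eq_divide_eq of_nat_mult)
  have "exp (2 * pi * \<i> * of_nat p / of_nat (aw n j)) ^ s = exp (of_nat s * (2 * pi * \<i> * of_nat p / of_nat (aw n j)))"
    by (simp only: exp_of_nat_mult)
  also have "\<dots> = exp (2 * pi * \<i> * of_nat s * (of_nat (kappa n) / of_nat (aw n j) * of_nat p) / of_nat (kappa n))"
    by (rule arg_cong[where f=exp]) (use Kn an in \<open>simp add: field_simps\<close>)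
  also have "\<dots> = exp (2 * pi * \<i> * of_nat s * of_int (int ((kappa n div aw n j) * p)) / of_nat (kappa n))"
    unfolding Kda[symmetric] by simp
  finally show ?thesis .
qed

lemma pairH_zero: "pairH n (\<lambda>_. 0) v = 0"
  by (simp add: pairH_def)

theorem proposition9:
  fixes n :: nat and logQ t1 t2 :: complex and a b :: Kel
  assumes "3 \<le> n" and "finite (Ksupp a)" and "finite (Ksupp b)" and "Re t2 < Re t1"
  shows "OmegaHas n (fplus n logQ a t1) (fminus n logQ b t2)
     (- 2 * pi * \<i> * of_int (rk a) * of_real (degK n b)
      + of_int (rk a * rk b) * (logQ - t2 / of_nat (n - 2))
      + (\<Sum>s\<in>{1..kappa n}. of_int (int_pair n a (sigmaK n s b)) *
           Ln (1 - eta n powi (- int s) * exp ((t2 - t1) / of_nat (kappa n)))))"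
proof -
  note n = assms(1) and fa = assms(2) and fb = assms(3)
  define d where "d = t2 - t1"
  have dneg: "Re d < 0" using assms(4) by (simp add: d_def)
  define K where "K = kappa n"
  define Lns where "Lns s = Ln (1 - exp (2 * pi * \<i> * of_nat s * of_int (-1) / of_nat K) * exp (d / of_nat K))" for s
  define ee where "ee j p s = exp (2 * pi * \<i> * of_nat s * of_int (int ((K div aw n j) * p)) / of_nat K)" for j p s
  define W where "W j p = 1 / of_nat (aw n j) * (chiK n j p a * chiK n j (aw n j - p) b)" for j p
  define R where "R = (of_int (rk a * rk b) / of_nat (n - 2) :: complex)"
  define Term where "Term m = (-1) ^ Suc m * pairH n (Ipos n logQ a m t1) (Ineg n logQ b m t2)" for m
  define X0 where "X0 = - (\<Sum>s\<in>{1..K}. Lns s)"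
  define X where "X j p = - (\<Sum>s\<in>{1..K}. ee j p s * Lns s)" for j p
  define V where "V = C0 n logQ a b t2 + R * (\<Sum>s\<in>{1..K}. Lns s) + (\<Sum>(j, p)\<in>twisted n. W j p * (\<Sum>s\<in>{1..K}. ee j p s * Lns s))"
  have ft: "finite (twisted n)" by (simp add: twisted_def)
  have h0: "((\<lambda>m. exp (of_nat (Suc m) * d) / of_nat (Suc m)) has_sum X0) UNIV"
    using has_sum_untw[OF n dneg] by (simp add: X0_def Lns_def K_def)
  have hjp: "((\<lambda>m. exp ((of_nat m + of_nat p / of_nat (aw n j)) * d) / (of_nat m + of_nat p / of_nat (aw n j))) has_sum X j p) UNIV"
    if "(j, p) \<in> twisted n" for j p
    using has_sum_tw[OF n dneg that] by (simp add: X_def ee_def Lns_def K_def)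
  have Term_eq: "Term m = (if m = 0 then C0 n logQ a b t2 else 0)
       + (- R) * (exp (of_nat (Suc m) * d) / of_nat (Suc m))
       + (- (\<Sum>(j, p)\<in>twisted n. W j p
           * (exp ((of_nat m + of_nat p / of_nat (aw n j)) * d) / (of_nat m + of_nat p / of_nat (aw n j)))))" for m
    unfolding Term_def term_formula[OF n] R_def W_def d_def by simp
  have hsum: "((\<lambda>m. \<Sum>(j, p)\<in>twisted n. W j p
           * (exp ((of_nat m + of_nat p / of_nat (aw n j)) * d) / (of_nat m + of_nat p / of_nat (aw n j))))
        has_sum (\<Sum>(j, p)\<in>twisted n. W j p * X j p)) UNIV"
    unfolding case_prod_unfold
  proof (rule has_sum_fsum[OF ft])
    fix i assume i: "i \<in> twisted n"
    obtain j p where jp: "i = (j, p)" by (cases i)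
    show "((\<lambda>m. W (fst i) (snd i) * (exp ((of_nat m + of_nat (snd i) / of_nat (aw n (fst i))) * d)
        / (of_nat m + of_nat (snd i) / of_nat (aw n (fst i))))) has_sum W (fst i) (snd i) * X (fst i) (snd i)) UNIV"
      unfolding jp fst_conv snd_conv by (rule has_sum_cmult_right[OF hjp[OF i[unfolded jp]]])
  qed
  have hneg: "((\<lambda>m. - (\<Sum>(j, p)\<in>twisted n. W j p
           * (exp ((of_nat m + of_nat p / of_nat (aw n j)) * d) / (of_nat m + of_nat p / of_nat (aw n j)))))
        has_sum - (\<Sum>(j, p)\<in>twisted n. W j p * X j p)) UNIV"
    using hsum by (simp only: has_sum_uminus minus_minus)
  have hT: "(Term has_sum (C0 n logQ a b t2 + (- R) * X0 + (- (\<Sum>(j, p)\<in>twisted n. W j p * X j p)))) UNIV"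
    unfolding Term_eq
    by (intro has_sum_add has_sum_delta0 has_sum_cmult_right h0 hneg)
  have VV: "C0 n logQ a b t2 + (- R) * X0 + (- (\<Sum>(j, p)\<in>twisted n. W j p * X j p)) = V"
    by (simp add: V_def X0_def X_def case_prod_unfold sum_negf)
  have cs: "(of_int (int_pair n a (sigmaK n s b)) :: complex) = R + (\<Sum>(j, p)\<in>twisted n. W j p * ee j p s)" for s
    unfolding c_formula[OF n fa fb] R_def
  proof (rule arg_cong[where f="\<lambda>x. _ + x"], rule sum.cong[OF refl])
    fix i assume i: "i \<in> twisted n"
    obtain j p where jp: "i = (j, p)" by (cases i)
    show "(case i of (j, p) \<Rightarrow> 1 / of_nat (aw n j) *
        (chiK n j p a * (exp (2 * pi * \<i> * of_nat p / of_nat (aw n j)) ^ s * chiK n j (aw n j - p) b)))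
      = (case i of (j, p) \<Rightarrow> W j p * ee j p s)"
      unfolding jp prod.case coef_eq[OF n] W_def ee_def K_def by (simp only: mult_ac)
  qed
  have RHS: "- 2 * pi * \<i> * of_int (rk a) * of_real (degK n b)
      + of_int (rk a * rk b) * (logQ - t2 / of_nat (n - 2))
      + (\<Sum>s\<in>{1..kappa n}. of_int (int_pair n a (sigmaK n s b)) *
           Ln (1 - eta n powi (- int s) * exp ((t2 - t1) / of_nat (kappa n)))) = V"
  proof -
    have "(\<Sum>s\<in>{1..kappa n}. of_int (int_pair n a (sigmaK n s b)) *
           Ln (1 - eta n powi (- int s) * exp ((t2 - t1) / of_nat (kappa n))))
        = (\<Sum>s\<in>{1..K}. (R + (\<Sum>(j, p)\<in>twisted n. W j p * ee j p s)) * Lns s)"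
      by (rule sum.cong) (simp_all add: cs eta_powi[OF n] Lns_def K_def d_def)
    also have "\<dots> = R * (\<Sum>s\<in>{1..K}. Lns s) + (\<Sum>(j, p)\<in>twisted n. W j p * (\<Sum>s\<in>{1..K}. ee j p s * Lns s))"
      by (simp add: ring_distribs sum.distrib sum_distrib_left sum_distrib_right case_prod_unfold mult_ac sum.swap[of _ "twisted n"])
    finally show ?thesis by (simp add: V_def C0_def add.assoc)
  qed
  define G where "G m = (- 1 :: complex) powi (m + 1) * pairH n (fplus n logQ a t1 m) (fminus n logQ b t2 (- 1 - m))" for m
  have Gnat: "G (int k) = Term k" for k
  proof -
    have "(- 1 :: complex) powi (int k + 1) = (-1) ^ Suc k"
      by (metis of_nat_Suc power_int_of_nat add.commute)
    moreover have "nat (- (- 1 - int k) - 1) = k" by simp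
    ultimately show ?thesis by (simp add: G_def Term_def fplus_def fminus_def)
  qed
  have Gneg: "G m = 0" if "m \<notin> range int" for m
  proof -
    have "m < 0" using that by (metis nonneg_int_cases not_less rangeI)
    then show ?thesis by (simp add: G_def fplus_def pairH_zero)
  qed
  have "((G \<circ> int) has_sum V) UNIV" using hT VV by (simp add: comp_def Gnat)
  then have "(G has_sum V) (range int)" using has_sum_reindex[of int UNIV G V] by simp
  moreover have "(G has_sum V) (range int) \<longleftrightarrow> (G has_sum V) UNIV"
    by (rule has_sum_cong_neutral) (use Gneg in auto)
  ultimately have "(G has_sum V) UNIV" by simp
  then show ?thesis unfolding OmegaHas_def RHS G_def .
qed

end
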